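(* For every $c_s>0$, there exists $\epsilon_0>0$ such that whenever $\epsilon\in(0,\epsilon_0]$, there is a constant $\delta>0$ (depending on $c_s$ and $\epsilon$) such that $$\inf_{K\in[c_s,c_s^{-1}]}|c'(K)|\geq\delta,$$ where $c$ is the function associated with the potential $\Phi(x)=\frac{x^2}{2}+\frac{\epsilon x^4}{2}$ as described in the context.
   Context: Let $\epsilon>0$, $\Phi(x)=\frac{x^2}{2}+\frac{\epsilon x^4}{2}$ and $H(x,v)=\frac{v^2}{2}+\Phi(x)$. For $(x,v)\neq(0,0)$ define the angle $\chi\in\mathbb{R}/2\pi\mathbb{Z}$ by $\chi=\arcsin\big(v/\sqrt{2H}\big)$ if $x>0$ and $\chi=\pi-\arcsin\big(v/\sqrt{2H}\big)$ if $x\leq 0$; then $(x,v)\mapsto(\chi,H)$ is a bijection onto $(\mathbb{R}/2\pi\mathbb{Z})\times(0,\infty)$, and we write $x=x(\chi,H)$. Set $a(\chi,H)=\sqrt{2}\,\frac{1+2\epsilon x^2}{\sqrt{1+\epsilon x^2}}$ with $x=x(\chi,H)$. Define $c(H)>0$ for $H>0$ by $c(H)\int_0^{2\pi}\frac{\mathrm{d}\chi}{a(\chi,H)}=2\pi$; we also write $c(K)$ with $K=H$. *)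

theory Defs
  imports "HOL-Analysis.Analysis"
begin

definition Phi :: "real \<Rightarrow> real \<Rightarrow> real" where
  "Phi eps x = x^2 / 2 + eps * x^4 / 2"

definition Ham :: "real \<Rightarrow> real \<Rightarrow> real \<Rightarrow> real" where
  "Ham eps x v = v^2 / 2 + Phi eps x"

text \<open>The angle chi of (x,v), as a real representative of an element of R/2piZ.\<close>
definition chi_of :: "real \<Rightarrow> real \<Rightarrow> real \<Rightarrow> real" where
  "chi_of eps x v =
     (if x > 0 then arcsin (v / sqrt (2 * Ham eps x v))
      else pi - arcsin (v / sqrt (2 * Ham eps x v)))"

definition mod2pi_eq :: "real \<Rightarrow> real \<Rightarrow> bool" where
  "mod2pi_eq a b \<longleftrightarrow> (\<exists>k::int. a - b = 2 * pi * of_int k)"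

text \<open>x = x(chi,H): inverse of the bijection (x,v) \<mapsto> (chi,H).\<close>
definition x_of :: "real \<Rightarrow> real \<Rightarrow> real \<Rightarrow> real" where
  "x_of eps chi H = fst (THE p. p \<noteq> (0,0) \<and> Ham eps (fst p) (snd p) = H
                              \<and> mod2pi_eq (chi_of eps (fst p) (snd p)) chi)"

definition a_fun :: "real \<Rightarrow> real \<Rightarrow> real \<Rightarrow> real" where
  "a_fun eps chi H = (let x = x_of eps chi H in
      sqrt 2 * (1 + 2 * eps * x^2) / sqrt (1 + eps * x^2))"

definition c_fun :: "real \<Rightarrow> real \<Rightarrow> real" where
  "c_fun eps H = 2 * pi / integral {0..2*pi} (\<lambda>chi. 1 / a_fun eps chi H)"

end

theory Submission
  imports Defs
begin

lemma mod2pi_iff: "mod2pi_eq a b \<longleftrightarrow> sin a = sin b \<and> cos a = cos b"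
  unfolding mod2pi_eq_def sin_cos_eq_iff by (auto simp: algebra_simps)

lemma Ham_expand: "2 * Ham eps x v = v^2 + x^2 + eps * x^4"
  by (simp add: Ham_def Phi_def)

lemma chi_trig:
  assumes "eps > 0" "(x, v) \<noteq> (0::real, 0::real)"
  defines "R \<equiv> 2 * Ham eps x v"
  shows "R > 0" "sin (chi_of eps x v) = v / sqrt R"
    "cos (chi_of eps x v) = (if x > 0 then sqrt (1 - (v / sqrt R)^2) else - sqrt (1 - (v / sqrt R)^2))"
proof -
  have R: "R = v^2 + x^2 + eps * x^4" using Ham_expand R_def by simp
  have "x \<noteq> 0 \<or> v \<noteq> 0" using assms(2) by auto
  hence "v^2 + x^2 > 0" by (auto simp: add_pos_nonneg add_nonneg_pos)
  moreover have "eps * x^4 \<ge> 0" using assms(1) by simp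
  ultimately show Rp: "R > 0" using R by linarith
  have "v^2 \<le> R" using R \<open>eps * x^4 \<ge> 0\<close> by (simp add: add_nonneg_nonneg)
  hence "(v / sqrt R)^2 \<le> 1" using Rp by (simp add: power_divide)
  hence b: "-1 \<le> v / sqrt R" "v / sqrt R \<le> 1"
    by (metis abs_le_iff abs_square_le_1 minus_le_iff)+
  show "sin (chi_of eps x v) = v / sqrt R"
    using b by (simp add: chi_of_def R_def)
  show "cos (chi_of eps x v) = (if x > 0 then sqrt (1 - (v / sqrt R)^2) else - sqrt (1 - (v / sqrt R)^2))"
    using b by (simp add: chi_of_def R_def cos_arcsin)
qed

lemma sincos_mod2pi:
  assumes "sin a = sin b" "cos a = cos b" shows "mod2pi_eq a b"
  using assms mod2pi_iff by blast

lemma quad_sol: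
  fixes q e C :: real
  assumes "e > 0" "q \<ge> 0" "q + e * q^2 = C"
  shows "q = (sqrt (1 + 4 * e * C) - 1) / (2 * e)"
proof -
  have "(2*e*q+1)^2 = 1 + 4*e*(q + e * q^2)" by (simp add: power2_eq_square algebra_simps)
  hence "(2*e*q+1)^2 = 1 + 4*e*C" using assms(3) by simp
  moreover have "2*e*q+1 \<ge> 0" using assms by simp
  ultimately have "sqrt (1 + 4*e*C) = 2*e*q+1" by (metis real_sqrt_unique)
  thus ?thesis using assms(1) by (simp add: field_simps)
qed

lemma char_sol:
  assumes e: "eps > 0" and H: "H > 0" and p: "(x, v) \<noteq> (0::real, 0::real)"
    and hH: "Ham eps x v = H" and hc: "mod2pi_eq (chi_of eps x v) chi"
  shows "v = sqrt (2*H) * sin chi" "x > 0 \<longleftrightarrow> cos chi > 0"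
    "x^2 = (sqrt (1 + 8 * eps * H * (cos chi)^2) - 1) / (2 * eps)"
proof -
  define R where "R = 2 * Ham eps x v"
  note ct = chi_trig[OF e p, folded R_def]
  have sc: "sin chi = v / sqrt R" "cos chi = (if x > 0 then sqrt (1 - (v / sqrt R)^2) else - sqrt (1 - (v / sqrt R)^2))"
    using hc ct by (auto simp: mod2pi_iff)
  have R: "R = 2*H" using R_def hH by simp
  show "v = sqrt (2*H) * sin chi" using sc(1) R ct(1) by simp
  have R2: "R = v^2 + x^2 + eps * x^4" using Ham_expand R_def by simp
  have cc: "(cos chi)^2 = 1 - (v / sqrt R)^2" by (simp add: cos_squared_eq sc(1))
  have cc2: "(cos chi)^2 * R = x^2 + eps * x^4" using cc ct(1) R2 by (simp add: power_divide field_simps)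
  have q: "x^2 + eps * (x^2)^2 = 2 * H * (cos chi)^2" proof -
    have "(x^2)^2 = x^4" by (simp flip: power_mult)
    thus ?thesis using cc2 R by (simp add: mult.commute)
  qed
  show "x^2 = (sqrt (1 + 8 * eps * H * (cos chi)^2) - 1) / (2 * eps)"
    using quad_sol[OF e _ q] by (simp add: algebra_simps)
  show "x > 0 \<longleftrightarrow> cos chi > 0"
  proof
    assume "x > 0"
    hence "x^2 + eps * x^4 > 0" using e by (simp add: add_pos_nonneg)
    hence "(cos chi)^2 \<noteq> 0" using cc2 by auto
    thus "cos chi > 0" proof -
      have "cos chi \<ge> 0" using sc(2) \<open>x>0\<close> cc by (simp add: cos_squared_eq)
      moreover have "cos chi \<noteq> 0" using \<open>(cos chi)^2 \<noteq> 0\<close> by auto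
      ultimately show ?thesis by linarith
    qed
  next
    assume "cos chi > 0" thus "x > 0" using sc(2) cc by (cases "x > 0") (auto simp: cos_squared_eq)
  qed
qed

lemma x_of_sq:
  assumes e: "eps > 0" and H: "H > 0"
  shows "eps * (x_of eps chi H)^2 = (sqrt (1 + 8 * eps * H * (cos chi)^2) - 1) / 2"
proof -
  define S where "S = sqrt (1 + 8 * eps * H * (cos chi)^2)"
  define X0 where "X0 = sqrt ((S - 1) / (2 * eps))"
  define xw where "xw = (if cos chi > 0 then X0 else - X0)"
  define vw where "vw = sqrt (2*H) * sin chi"
  have S1: "S \<ge> 1" unfolding S_def using e H by simp
  have X0sq: "X0^2 = (S - 1) / (2 * eps)" unfolding X0_def using S1 e by simp
  have X0pos: "X0 > 0" if "cos chi \<noteq> 0"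
  proof -
    have "8 * eps * H * (cos chi)^2 > 0" using e H that by simp
    hence "S > 1" unfolding S_def by simp
    thus ?thesis unfolding X0_def using e by simp
  qed
  have X0nn: "X0 \<ge> 0" unfolding X0_def using S1 e by simp
  have xwsq: "xw^2 = X0^2" unfolding xw_def by simp
  have S2: "S^2 = 1 + 8 * eps * H * (cos chi)^2" unfolding S_def using e H by simp
  let ?P = "\<lambda>p. p \<noteq> (0,0) \<and> Ham eps (fst p) (snd p) = H \<and> mod2pi_eq (chi_of eps (fst p) (snd p)) chi"
  have xwpos: "xw > 0 \<longleftrightarrow> cos chi > 0" unfolding xw_def using X0pos X0nn by auto
  have nz: "(xw, vw) \<noteq> (0, 0)"
  proof
    assume "(xw, vw) = (0, 0)"
    hence "xw = 0" "vw = 0" by auto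
    hence "cos chi = 0" using X0pos unfolding xw_def by (auto split: if_splits)
    hence "sin chi \<noteq> 0" using sin_zero_iff_int2 cos_zero_iff_int2 by (metis sin_cos_squared_add zero_neq_one power_zero_numeral add_0 add_0_right)
    thus False using \<open>vw = 0\<close> H unfolding vw_def by simp
  qed
  have Hw: "Ham eps xw vw = H"
  proof -
    have "(xw^2)^2 = xw^4" by (simp flip: power_mult)
    have a: "xw^2 + eps * xw^4 = 2 * H * (cos chi)^2"
    proof -
      have "xw^2 + eps * xw^4 = (S - 1) / (2 * eps) + eps * ((S - 1) / (2 * eps))^2"
        using X0sq xwsq \<open>(xw^2)^2 = xw^4\<close> by metis
      also have "\<dots> = (S^2 - 1) / (4 * eps)" using e by (simp add: field_simps power2_eq_square)
      also have "\<dots> = 2 * H * (cos chi)^2" using S2 e by simp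
      finally show ?thesis .
    qed
    have b: "vw^2 = 2 * H * (sin chi)^2" unfolding vw_def using H by (simp add: power_mult_distrib)
    have "2 * Ham eps xw vw = 2 * H" unfolding Ham_expand using a b
      by (metis add.assoc distrib_left mult.right_neutral sin_cos_squared_add)
    thus ?thesis by simp
  qed
  have Cw: "mod2pi_eq (chi_of eps xw vw) chi"
  proof (rule sincos_mod2pi)
    note ct = chi_trig[OF e nz]
    have R: "2 * Ham eps xw vw = 2 * H" using Hw by simp
    have q: "vw / sqrt (2*H) = sin chi" unfolding vw_def using H by simp
    show "sin (chi_of eps xw vw) = sin chi" using ct(2) R q by simp
    have r: "sqrt (1 - (sin chi)^2) = \<bar>cos chi\<bar>" by (simp add: sin_squared_eq)
    show "cos (chi_of eps xw vw) = cos chi" using ct(3) R q r xwpos by auto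
  qed
  have uniq: "p = (xw, vw)" if "?P p" for p
  proof -
    obtain x v where p: "p = (x, v)" by fastforce
    have h: "(x, v) \<noteq> (0,0)" "Ham eps x v = H" "mod2pi_eq (chi_of eps x v) chi" using that p by auto
    note cs = char_sol[OF e H h]
    have "v = vw" using cs(1) vw_def by simp
    moreover have "x = xw"
    proof (cases "cos chi > 0")
      case True
      hence "x > 0" using cs(2) by simp
      hence "x = sqrt (x^2)" by simp
      also have "\<dots> = X0" using cs(3) X0_def S_def by simp
      finally show ?thesis using True xw_def by simp
    next
      case False
      hence "x \<le> 0" using cs(2) by simp
      hence "x = - sqrt (x^2)" by simp
      also have "\<dots> = - X0" using cs(3) X0_def S_def by simp
      finally show ?thesis using False xw_def by simp
    qed
    ultimately show ?thesis using p by simp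
  qed
  have "(THE p. ?P p) = (xw, vw)"
    by (rule the_equality) (use nz Hw Cw uniq in auto)
  hence "x_of eps chi H = xw" unfolding x_of_def by simp
  thus ?thesis using xwsq X0sq e S_def by simp
qed

definition Gf :: "real \<Rightarrow> real" where
  "Gf t = sqrt (1 + sqrt (1 + t)) / (2 * sqrt (1 + t))"

definition Gd :: "real \<Rightarrow> real" where
  "Gd t = - (sqrt (1 + t) + 2) / (8 * sqrt (1 + t) ^ 3 * sqrt (1 + sqrt (1 + t)))"

lemma a_inv:
  assumes e: "eps > 0" and H: "H > 0"
  shows "1 / a_fun eps chi H = Gf (8 * eps * H * (cos chi)^2)"
proof -
  define S where "S = sqrt (1 + 8 * eps * H * (cos chi)^2)"
  have S1: "S \<ge> 1" unfolding S_def using e H by simp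
  have y: "eps * (x_of eps chi H)^2 = (S - 1) / 2" using x_of_sq[OF e H] S_def by simp
  have a: "a_fun eps chi H = sqrt 2 * S / sqrt ((1 + S) / 2)"
  proof -
    define x where "x = x_of eps chi H"
    have "eps * x^2 = (S - 1) / 2" using y x_def by simp
    hence 1: "1 + 2 * eps * x^2 = S" "1 + eps * x^2 = (1 + S) / 2" by (simp_all add: mult.assoc)
    show ?thesis unfolding a_fun_def Let_def x_def[symmetric] 1 ..
  qed
  have "1 / a_fun eps chi H = sqrt ((1 + S) / 2) / (sqrt 2 * S)" using a by simp
  also have "\<dots> = sqrt (1 + S) / (2 * S)"
  proof -
    have "sqrt ((1 + S) / 2) = sqrt (1 + S) / sqrt 2" by (simp add: real_sqrt_divide)
    hence "sqrt ((1 + S) / 2) / (sqrt 2 * S) = sqrt (1 + S) / ((sqrt 2 * sqrt 2) * S)"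
      by (simp add: divide_divide_eq_left mult.assoc)
    thus ?thesis by simp
  qed
  finally show ?thesis unfolding Gf_def S_def .
qed

lemma Gf_deriv:
  assumes t: "t > -1"
  shows "(Gf has_real_derivative Gd t) (at t)"
proof -
  define w where "w = sqrt (1 + t)"
  have w: "w > 0" unfolding w_def using t by simp
  have w2: "w^2 = 1 + t" unfolding w_def using t by simp
  define z where "z = sqrt (1 + w)"
  have z: "z > 0" unfolding z_def using w by simp
  have z2: "z^2 = 1 + w" unfolding z_def using w by simp
  have dw: "((\<lambda>t. sqrt (1 + t)) has_real_derivative 1 / (2 * w)) (at t)"
  proof -
    have g: "((\<lambda>t. 1 + t) has_real_derivative 1) (at t)"
      using DERIV_add[OF DERIV_const[of 1] DERIV_ident] by simp
    have s: "(sqrt has_real_derivative inverse (sqrt (1 + t)) / 2) (at (1 + t))"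
      by (rule DERIV_real_sqrt) (use t in simp)
    have e: "inverse (sqrt (1 + t)) / 2 * 1 = 1 / (2 * w)" unfolding w_def by (simp add: field_simps)
    from DERIV_chain2[OF s g] show ?thesis unfolding e .
  qed
  have dz: "((\<lambda>t. sqrt (1 + sqrt (1 + t))) has_real_derivative (1 / (2 * w)) / (2 * z)) (at t)"
  proof -
    have g: "((\<lambda>t. 1 + sqrt (1 + t)) has_real_derivative 1 / (2 * w)) (at t)"
      using DERIV_add[OF DERIV_const[of 1] dw] by simp
    have s: "(sqrt has_real_derivative inverse (sqrt (1 + sqrt (1 + t))) / 2) (at (1 + sqrt (1 + t)))"
      by (rule DERIV_real_sqrt) (use w in \<open>simp add: w_def add_pos_pos\<close>)
    have e: "inverse (sqrt (1 + sqrt (1 + t))) / 2 * (1 / (2 * w)) = 1 / (2 * w) / (2 * z)"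
      unfolding z_def w_def by (simp add: field_simps)
    from DERIV_chain2[OF s g] show ?thesis unfolding e .
  qed
  have d0: "(Gf has_real_derivative
      ((1 / (2 * w)) / (2 * z) * (2 * w) - z * (2 * (1 / (2 * w)))) / ((2 * w) * (2 * w))) (at t)"
    using DERIV_divide[OF dz DERIV_cmult[OF dw, of 2]] w
    unfolding Gf_def w_def[symmetric] z_def[symmetric] by simp
  have "((1 / (2 * w)) / (2 * z) * (2 * w) - z * (2 * (1 / (2 * w)))) / ((2 * w) * (2 * w))
        = (w - 2 * z^2) / (8 * w^3 * z)"
    using w z by (simp add: field_simps power2_eq_square power3_eq_cube)
  also have "\<dots> = - (w + 2) / (8 * w^3 * z)" using z2 by simp
  also have "\<dots> = Gd t" unfolding Gd_def w_def[symmetric] z_def[symmetric] ..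
  finally show ?thesis using d0 by simp
qed

lemma Gd_cont: "continuous_on {-1<..} Gd"
proof -
  have nz: "1 + sqrt (1 + t) \<noteq> 0" if "t > -1" for t :: real
  proof -
    have "sqrt (1 + t) \<ge> 0" using that by simp
    thus ?thesis by linarith
  qed
  show ?thesis unfolding Gd_def by (intro continuous_intros) (auto simp: nz)
qed

lemma Gf_cont: "continuous_on {-1<..} Gf"
  by (rule DERIV_continuous_on, rule has_field_derivative_at_within, rule Gf_deriv) auto

lemma sqrt_le_self: "1 \<le> (y::real) \<Longrightarrow> sqrt y \<le> y"
proof -
  assume y: "1 \<le> y"
  have "y * 1 \<le> y * y" using y by (intro mult_left_mono) auto
  hence "sqrt y \<le> sqrt (y * y)" by (intro real_sqrt_le_mono) simp
  thus ?thesis using y by simp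
qed

lemma Gf_bounds:
  assumes "0 \<le> t" "t \<le> T"
  shows "Gf t \<le> 1" "Gf t \<ge> 1 / (2 * (1 + T))"
proof -
  define w where "w = sqrt (1 + t)"
  have w1: "w \<ge> 1" unfolding w_def using assms by simp
  have wT: "w \<le> 1 + T"
  proof -
    have "w \<le> 1 + t" unfolding w_def using assms by (intro sqrt_le_self) simp
    thus ?thesis using assms by linarith
  qed
  define z where "z = sqrt (1 + w)"
  have z1: "z \<ge> 1" unfolding z_def using w1 by simp
  have zw: "z \<le> 2 * w"
  proof -
    have "z \<le> 1 + w" unfolding z_def using w1 by (intro sqrt_le_self) simp
    thus ?thesis using w1 by linarith
  qed
  have G: "Gf t = z / (2 * w)" unfolding Gf_def w_def z_def ..
  show "Gf t \<le> 1" using G zw w1 by simp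
  have "1 / (2 * (1 + T)) \<le> 1 / (2 * w)" using w1 wT by (intro divide_left_mono) auto
  also have "\<dots> \<le> z / (2 * w)" using z1 w1 by (intro divide_right_mono) auto
  finally show "Gf t \<ge> 1 / (2 * (1 + T))" using G by simp
qed

lemma Gd_bound:
  assumes "0 \<le> t" "t \<le> T"
  shows "Gd t \<le> - (1 / (16 * (1 + T)^4))"
proof -
  define w where "w = sqrt (1 + t)"
  have w1: "w \<ge> 1" unfolding w_def using assms by simp
  have wT: "w \<le> 1 + T"
  proof -
    have "w \<le> 1 + t" unfolding w_def using assms by (intro sqrt_le_self) simp
    thus ?thesis using assms by linarith
  qed
  define z where "z = sqrt (1 + w)"
  have z1: "z \<ge> 1" unfolding z_def using w1 by simp
  have zw: "z \<le> 2 * (1 + T)"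
  proof -
    have "z \<le> 1 + w" unfolding z_def using w1 by (intro sqrt_le_self) simp
    thus ?thesis using w1 wT assms by (smt (verit))
  qed
  have G: "Gd t = - ((w + 2) / (8 * w^3 * z))" unfolding Gd_def w_def z_def by (simp only: minus_divide_left)
  have "8 * w^3 * z \<le> 8 * (1 + T)^3 * (2 * (1 + T))"
    using w1 wT z1 zw by (intro mult_mono power_mono) auto
  moreover have "8 * (1 + T)^3 * (2 * (1 + T)) = 16 * (1 + T)^4" by (simp add: eval_nat_numeral algebra_simps)
  ultimately have "8 * w^3 * z \<le> 16 * (1 + T)^4" by linarith
  hence "1 / (16 * (1 + T)^4) \<le> 1 / (8 * w^3 * z)" using w1 z1 assms by (intro divide_left_mono) auto
  also have "\<dots> \<le> (w + 2) / (8 * w^3 * z)" using w1 z1 by (intro divide_right_mono) auto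
  finally show ?thesis using G by simp
qed

lemma int_cos2: "((\<lambda>x. (cos x)^2) has_integral pi) {0..2*pi}"
proof -
  have d: "((\<lambda>x. x / 2 + sin (2 * x) / 4) has_vector_derivative (cos x)^2) (at x within {0..2*pi})" for x
  proof -
    have "((\<lambda>x. x / 2 + sin (2 * x) / 4) has_real_derivative (1 / 2 + cos (2 * x) * 2 / 4)) (at x within {0..2*pi})"
      by (auto intro!: derivative_eq_intros)
    moreover have "1 / 2 + cos (2 * x) * 2 / 4 = (cos x)^2" by (subst cos_double_cos) (simp add: field_simps)
    ultimately show ?thesis by (simp add: has_real_derivative_iff_has_vector_derivative)
  qed
  have s: "sin (2 * (2 * pi)) = 0" using sin_int_2pin[of 2] by (simp add: mult.commute)
  have "((\<lambda>x. (cos x)^2) has_integral ((2*pi) / 2 + sin (2 * (2*pi)) / 4 - (0 / 2 + sin (2 * 0) / 4))) {0..2*pi}"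
    by (rule fundamental_theorem_of_calculus) (use d in auto)
  thus ?thesis using s by simp
qed

theorem lemma4p3:
  shows "\<forall>cs::real. cs > 0 \<longrightarrow>
    (\<exists>eps0::real. eps0 > 0 \<and>
      (\<forall>eps. 0 < eps \<and> eps \<le> eps0 \<longrightarrow>
        (\<exists>\<delta>::real. \<delta> > 0 \<and>
          (\<forall>K \<in> {cs..1/cs}. \<exists>D. (c_fun eps has_real_derivative D) (at K) \<and> \<bar>D\<bar> \<ge> \<delta>))))"
proof (intro allI impI)
  fix cs :: real assume cs: "cs > 0"
  show "\<exists>eps0::real. eps0 > 0 \<and>
      (\<forall>eps. 0 < eps \<and> eps \<le> eps0 \<longrightarrow>
        (\<exists>\<delta>::real. \<delta> > 0 \<and>
          (\<forall>K \<in> {cs..1/cs}. \<exists>D. (c_fun eps has_real_derivative D) (at K) \<and> \<bar>D\<bar> \<ge> \<delta>)))"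
  proof (rule exI[of _ "1::real"], intro conjI allI impI)
    show "(1::real) > 0" by simp
    fix eps :: real assume "0 < eps \<and> eps \<le> 1"
    hence e: "eps > 0" by simp
    define T where "T = 8 * eps / cs"
    have T0: "T \<ge> 0" unfolding T_def using e cs by simp
    define m where "m = 1 / (16 * (1 + T)^4)"
    have m0: "m > 0" unfolding m_def using T0 by simp
    show "\<exists>\<delta>::real. \<delta> > 0 \<and>
          (\<forall>K \<in> {cs..1/cs}. \<exists>D. (c_fun eps has_real_derivative D) (at K) \<and> \<bar>D\<bar> \<ge> \<delta>)"
    proof (rule exI[of _ "4 * eps * m"], intro conjI ballI)
      show "4 * eps * m > 0" using e m0 by simp
      fix K assume K: "K \<in> {cs..1/cs}"
      have K0: "K > 0" using K cs by simp
      have KT: "8 * eps * K \<le> T"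
      proof -
        have "K \<le> 1 / cs" using K by simp
        hence "8 * eps * K \<le> 8 * eps * (1 / cs)" using e by (intro mult_left_mono) auto
        thus ?thesis unfolding T_def by simp
      qed
      have trange: "0 \<le> 8 * eps * K * (cos x)^2 \<and> 8 * eps * K * (cos x)^2 \<le> T" for x
      proof
        show "0 \<le> 8 * eps * K * (cos x)^2" using e K0 by simp
        have "8 * eps * K * (cos x)^2 \<le> 8 * eps * K * 1"
          using e K0 by (intro mult_left_mono) (auto simp: abs_square_le_1)
        thus "8 * eps * K * (cos x)^2 \<le> T" using KT by simp
      qed
      define f where "f H x = Gf (8 * eps * H * (cos x)^2)" for H x
      define fx where "fx H x = Gd (8 * eps * H * (cos x)^2) * (8 * eps * (cos x)^2)" for H x
      define J where "J H = integral {0..2*pi} (f H)" for H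
      have df: "((\<lambda>H. f H x) has_field_derivative fx H x) (at H within {0<..})" if H: "H \<in> {0<..}" for H x
      proof -
        have g: "((\<lambda>H. 8 * eps * H * (cos x)^2) has_real_derivative 8 * eps * (cos x)^2) (at H within {0<..})"
          by (auto intro!: derivative_eq_intros)
        have t: "8 * eps * H * (cos x)^2 > -1"
        proof -
          have "8 * eps * H * (cos x)^2 \<ge> 0" using e H by simp
          thus ?thesis by linarith
        qed
        show ?thesis unfolding f_def fx_def using DERIV_chain2[OF Gf_deriv[OF t] g] .
      qed
      have contf: "continuous_on {0..2*pi} (f H)" if H: "H > 0" for H
      proof -
        have "continuous_on {0..2*pi} (\<lambda>x. 8 * eps * H * (cos x)^2)" by (intro continuous_intros)
        moreover have "(\<lambda>x. 8 * eps * H * (cos x)^2) ` {0..2*pi} \<subseteq> {-1<..}"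
        proof
          fix y assume "y \<in> (\<lambda>x. 8 * eps * H * (cos x)^2) ` {0..2*pi}"
          then obtain x where "y = 8 * eps * H * (cos x)^2" by auto
          moreover have "8 * eps * H * (cos x)^2 \<ge> 0" using e H by simp
          ultimately have "y > -1" by linarith
          thus "y \<in> {-1<..}" by simp
        qed
        ultimately show ?thesis unfolding f_def[abs_def]
          by (rule continuous_on_compose2[OF Gf_cont])
      qed
      have contfx: "continuous_on ({0<..} \<times> cbox 0 (2*pi)) (\<lambda>(H, x). fx H x)"
      proof -
        have c1: "continuous_on ({0<..} \<times> cbox 0 (2*pi)) (\<lambda>p::real\<times>real. 8 * eps * fst p * (cos (snd p))^2)"
          by (intro continuous_intros)
        have im: "(\<lambda>p::real\<times>real. 8 * eps * fst p * (cos (snd p))^2) ` ({0<..} \<times> cbox 0 (2*pi)) \<subseteq> {-1<..}"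
        proof
          fix y assume "y \<in> (\<lambda>p::real\<times>real. 8 * eps * fst p * (cos (snd p))^2) ` ({0<..} \<times> cbox 0 (2*pi))"
          then obtain p where p: "p \<in> {0<..} \<times> cbox 0 (2*pi)" "y = 8 * eps * fst p * (cos (snd p))^2" by blast
          have "fst p > 0" using p(1) by (auto simp: mem_Times_iff)
          hence "8 * eps * fst p * (cos (snd p))^2 \<ge> 0" using e by simp
          moreover note p(2)
          ultimately have "y > -1" by linarith
          thus "y \<in> {-1<..}" by simp
        qed
        have c2: "continuous_on ({0<..} \<times> cbox 0 (2*pi)) (\<lambda>p::real\<times>real. Gd (8 * eps * fst p * (cos (snd p))^2))"
          by (rule continuous_on_compose2[OF Gd_cont c1 im])
        have c3: "continuous_on ({0<..} \<times> cbox 0 (2*pi)) (\<lambda>p::real\<times>real. 8 * eps * (cos (snd p))^2)"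
          by (intro continuous_intros)
        have "continuous_on ({0<..} \<times> cbox 0 (2*pi)) (\<lambda>p::real\<times>real. Gd (8 * eps * fst p * (cos (snd p))^2) * (8 * eps * (cos (snd p))^2))"
          by (rule continuous_on_mult[OF c2 c3])
        thus ?thesis unfolding fx_def case_prod_beta .
      qed
      have intf: "f H integrable_on cbox 0 (2*pi)" if "H \<in> {0<..}" for H
        using contf[of H] that by (simp add: integrable_continuous_interval)
      have L: "((\<lambda>H. integral (cbox 0 (2*pi)) (f H)) has_field_derivative integral (cbox 0 (2*pi)) (fx K)) (at K within {0<..})"
        by (rule leibniz_rule_field_derivative[where fx = fx]) (use df intf contfx K0 in auto)
      define J' where "J' = integral {0..2*pi} (fx K)"
      have dJ: "(J has_field_derivative J') (at K)"
      proof -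
        have eq: "(\<lambda>H. integral (cbox 0 (2*pi)) (f H)) = J" unfolding J_def[abs_def] cbox_interval ..
        have eq2: "integral (cbox 0 (2*pi)) (fx K) = J'" unfolding J'_def cbox_interval ..
        have eq3: "at K within {0<..} = at K" by (rule at_within_open) (use K0 in auto)
        show ?thesis using L unfolding eq eq2 eq3 .
      qed
      have contfxK: "continuous_on {0..2*pi} (fx K)"
      proof -
        have "continuous_on {0..2*pi} (\<lambda>x. Gd (8 * eps * K * (cos x)^2))"
        proof (rule continuous_on_compose2[OF Gd_cont])
          show "continuous_on {0..2*pi} (\<lambda>x. 8 * eps * K * (cos x)^2)" by (intro continuous_intros)
          show "(\<lambda>x. 8 * eps * K * (cos x)^2) ` {0..2*pi} \<subseteq> {-1<..}"
          proof
            fix y assume "y \<in> (\<lambda>x. 8 * eps * K * (cos x)^2) ` {0..2*pi}"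
            then obtain x where x: "y = 8 * eps * K * (cos x)^2" by blast
            have "y \<ge> 0" using x trange[of x] by simp
            hence "y > -1" by linarith
            thus "y \<in> {-1<..}" by simp
          qed
        qed
        moreover have "continuous_on {0..2*pi} (\<lambda>x. 8 * eps * (cos x)^2)" by (intro continuous_intros)
        ultimately have "continuous_on {0..2*pi} (\<lambda>x. Gd (8 * eps * K * (cos x)^2) * (8 * eps * (cos x)^2))"
          by (rule continuous_on_mult)
        thus ?thesis unfolding fx_def .
      qed
      have J'b: "J' \<le> - (m * 8 * eps * pi)"
      proof -
        have "J' \<le> integral {0..2*pi} (\<lambda>x. (- (m * 8 * eps)) * (cos x)^2)"
          unfolding J'_def
        proof (rule integral_le)
          show "fx K integrable_on {0..2*pi}" using contfxK by (simp add: integrable_continuous_interval)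
          show "(\<lambda>x. (- (m * 8 * eps)) * (cos x)^2) integrable_on {0..2*pi}"
            by (intro integrable_continuous_interval continuous_intros)
          fix x assume "x \<in> {0..2*pi}"
          have "Gd (8 * eps * K * (cos x)^2) \<le> - (1 / (16 * (1 + T)^4))"
            using trange[of x] by (intro Gd_bound) auto
          hence "Gd (8 * eps * K * (cos x)^2) \<le> - m" unfolding m_def .
          hence "Gd (8 * eps * K * (cos x)^2) * (8 * eps * (cos x)^2) \<le> (- m) * (8 * eps * (cos x)^2)"
            by (rule mult_right_mono) (use e in simp)
          moreover have "(- m) * (8 * eps * (cos x)^2) = (- (m * 8 * eps)) * (cos x)^2" by (simp add: algebra_simps)
          ultimately show "fx K x \<le> (- (m * 8 * eps)) * (cos x)^2" unfolding fx_def by (simp only:)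
        qed
        also have "\<dots> = (- (m * 8 * eps)) * pi"
          using has_integral_mult_right[OF int_cos2, of "- (m * 8 * eps)"] by (rule integral_unique)
        finally show ?thesis by simp
      qed
      have Jb: "J K \<le> 2 * pi" "J K \<ge> 2 * pi * (1 / (2 * (1 + T)))"
      proof -
        have ii: "f K integrable_on {0..2*pi}" using contf[OF K0] by (simp add: integrable_continuous_interval)
        have "J K \<le> integral {0..2*pi} (\<lambda>x. 1)" unfolding J_def
        proof (rule integral_le[OF ii])
          show "(\<lambda>x::real. 1::real) integrable_on {0..2*pi}" by (intro integrable_continuous_interval continuous_intros)
          fix x assume "x \<in> {0..2*pi}"
          show "f K x \<le> 1" unfolding f_def using trange[of x] by (intro Gf_bounds(1)[of _ T]) auto
        qed
        thus "J K \<le> 2 * pi" by simp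
        have "integral {0..2*pi} (\<lambda>x. 1 / (2 * (1 + T))) \<le> J K" unfolding J_def
        proof (rule integral_le[OF _ ii])
          show "(\<lambda>x::real. 1 / (2 * (1 + T))) integrable_on {0..2*pi}" by (intro integrable_continuous_interval continuous_intros)
          fix x assume "x \<in> {0..2*pi}"
          show "1 / (2 * (1 + T)) \<le> f K x" unfolding f_def using trange[of x] by (intro Gf_bounds(2)) auto
        qed
        thus "J K \<ge> 2 * pi * (1 / (2 * (1 + T)))" by simp
      qed
      have JK0: "J K > 0"
      proof -
        have "2 * pi * (1 / (2 * (1 + T))) > 0" using T0 by simp
        thus ?thesis using Jb(2) by linarith
      qed
      define D where "D = (0 * J K - 2 * pi * J') / (J K * J K)"
      have dc0: "((\<lambda>H. 2 * pi / J H) has_field_derivative D) (at K)"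
        unfolding D_def using DERIV_divide[OF DERIV_const dJ] JK0 by simp
      have ceq: "2 * pi / J H = c_fun eps H" if "H \<in> {0<..}" for H
      proof -
        have "integral {0..2*pi} (\<lambda>chi. 1 / a_fun eps chi H) = J H"
          unfolding J_def f_def using a_inv[OF e] that by (intro integral_cong) auto
        thus ?thesis unfolding c_fun_def by simp
      qed
      have dc: "(c_fun eps has_real_derivative D) (at K)"
        by (rule has_field_derivative_transform_within_open[where S="{0<..}", OF dc0 _ _ ceq]) (use K0 in auto)
      have "\<bar>D\<bar> \<ge> 4 * eps * m"
      proof -
        have Jp: "- J' \<ge> m * 8 * eps * pi" using J'b by simp
        have D1: "D = 2 * pi * (- J') / (J K * J K)" unfolding D_def by simp
        have "- J' > 0" using Jp m0 e by (smt (verit) mult_pos_pos pi_gt_zero)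
        hence "D \<ge> 0" unfolding D1 using JK0 by (intro divide_nonneg_pos mult_nonneg_nonneg) auto
        hence "\<bar>D\<bar> = D" by (rule abs_of_nonneg)
        hence "\<bar>D\<bar> = 2 * pi * (- J') / (J K * J K)" using D1 by (simp only:)
        have "2 * pi * (m * 8 * eps * pi) / (J K * J K) \<le> 2 * pi * (- J') / (J K * J K)"
          using Jp JK0 by (intro divide_right_mono mult_left_mono) auto
        moreover have "2 * pi * (m * 8 * eps * pi) / (2 * pi * (2 * pi)) \<le> 2 * pi * (m * 8 * eps * pi) / (J K * J K)"
          using JK0 Jb(1) m0 e by (intro divide_left_mono mult_mono) auto
        moreover have "2 * pi * (m * 8 * eps * pi) / (2 * pi * (2 * pi)) = 4 * eps * m"
          by (simp add: field_simps)
        ultimately show ?thesis using \<open>\<bar>D\<bar> = 2 * pi * (- J') / (J K * J K)\<close> by linarith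
      qed
      thus "\<exists>D. (c_fun eps has_real_derivative D) (at K) \<and> \<bar>D\<bar> \<ge> 4 * eps * m" using dc by blast
    qed
  qed
qed

end
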